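(* Let $k \ge 2$, $n \ge 1$ and $d \ge 1$ be integers, and let $f:[2k]^n \to \mathbb{R}^d$ satisfy $\|f(x_1,\ldots,x_n)\|_1 \le 1$ for all $x_1,\ldots,x_n \in [2k]$. For $0 \le \ell \le n$ and $x_1,\ldots,x_\ell \in [2k]$, let $f(x_1,\ldots,x_\ell)$ denote the average of $f(x_1,\ldots,x_n)$ over $x_{\ell+1},\ldots,x_n$ chosen uniformly and independently in $[2k]$. Suppose that for some $\varepsilon < 1/(k-1)$ the following holds for all $\ell \in [n]$, all $x_1,\ldots,x_{\ell-1} \in [2k]$ and all $r \in [k-1]$: $$\frac{1}{2k} \left\| \sum_{b=1}^r \bigl(f(x_1,\ldots,x_{\ell-1},b) + f(x_1,\ldots,x_{\ell-1},b+k)\bigr) - \sum_{b=r+1}^k \bigl(f(x_1,\ldots,x_{\ell-1},b) + f(x_1,\ldots,x_{\ell-1},b+k)\bigr) \right\|_1 \ge 1-\varepsilon.$$ Let $\delta := (k-1)\varepsilon/2$ (so $\delta < 1/2$). Then $$ d \ge 2^{(\log k - \delta \log (k-1) - H(\delta))n - 1} - \frac{1}{2}.$$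
   Context: $[m]$ denotes $\{1,\ldots,m\}$. All logarithms are base $2$. $H(\delta) := -\delta \log \delta - (1-\delta)\log(1-\delta)$ is the binary entropy function (with $0\log 0 = 0$). $\|\cdot\|_1$ is the $\ell_1$ norm on $\mathbb{R}^d$. *)

theory Defs
  imports "HOL-Analysis.Analysis"
begin

definition tuples :: "nat \<Rightarrow> nat \<Rightarrow> nat list set" where
  "tuples m j = {ys. length ys = j \<and> set ys \<subseteq> {1..m}}"

text \<open>The l1 norm on R^d (d = CARD('d)).\<close>
definition l1norm :: "real ^ 'd \<Rightarrow> real" where
  "l1norm v = (\<Sum>i\<in>UNIV. \<bar>v $ i\<bar>)"

definition partial_avg :: "nat \<Rightarrow> nat \<Rightarrow> (nat list \<Rightarrow> real ^ 'd) \<Rightarrow> nat list \<Rightarrow> real ^ 'd" where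
  "partial_avg k n f xs =
     (1 / real (card (tuples (2*k) (n - length xs)))) *\<^sub>R
       (\<Sum>ys\<in>tuples (2*k) (n - length xs). f (xs @ ys))"

definition bin_entropy :: "real \<Rightarrow> real" where
  "bin_entropy \<delta> = (if \<delta> = 0 then 0 else - \<delta> * log 2 \<delta>)
                    + (if \<delta> = 1 then 0 else - (1 - \<delta>) * log 2 (1 - \<delta>))"

end

theory Submission
  imports Defs
begin


lemma tuples_Suc: "tuples m (Suc j) = (\<lambda>(a,ys). a#ys) ` ({1..m} \<times> tuples m j)"
proof (rule set_eqI)
  fix x show "x \<in> tuples m (Suc j) \<longleftrightarrow> x \<in> (\<lambda>(a,ys). a#ys) ` ({1..m} \<times> tuples m j)"
    by (cases x) (auto simp: tuples_def image_iff)
qed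

lemma tuples_0: "tuples m 0 = {[]}" by (auto simp: tuples_def)

lemma finite_tuples: "finite (tuples m j)"
  by (induction j) (auto simp: tuples_Suc tuples_0)

lemma inj_cons: "inj_on (\<lambda>(a,ys). a#ys) A" by (auto simp: inj_on_def)

lemma card_tuples: "card (tuples m j) = m ^ j"
proof (induction j)
  case 0 then show ?case by (simp add: tuples_0)
next
  case (Suc j)
  have "card (tuples m (Suc j)) = card ({1..m} \<times> tuples m j)"
    unfolding tuples_Suc by (rule card_image[OF inj_cons])
  then show ?case using Suc by (simp add: card_cartesian_product)
qed

lemma sum_tuples_Suc: "(\<Sum>x\<in>tuples m (Suc j). F x) = (\<Sum>a\<in>{1..m}. \<Sum>ys\<in>tuples m j. F (a#ys))"
proof -
  have "(\<Sum>x\<in>tuples m (Suc j). F x) = (\<Sum>p\<in>{1..m} \<times> tuples m j. F ((\<lambda>(a,ys). a#ys) p))"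
    unfolding tuples_Suc by (simp only: sum.reindex[OF inj_cons] comp_def)
  also have "\<dots> = (\<Sum>p\<in>{1..m} \<times> tuples m j. case p of (a,ys) \<Rightarrow> F (a#ys))"
    by (rule sum.cong) auto
  also have "\<dots> = (\<Sum>a\<in>{1..m}. \<Sum>ys\<in>tuples m j. F (a#ys))"
    by (rule sum.cartesian_product[symmetric])
  finally show ?thesis .
qed

lemma sum_tuples_add: "(\<Sum>x\<in>tuples m (i+j). F x) = (\<Sum>xs\<in>tuples m i. \<Sum>ys\<in>tuples m j. F (xs@ys))"
proof (induction i arbitrary: F)
  case 0 then show ?case by (simp add: tuples_0)
next
  case (Suc i)
  have "(\<Sum>x\<in>tuples m (Suc i + j). F x) = (\<Sum>a\<in>{1..m}. \<Sum>zs\<in>tuples m (i+j). F (a#zs))"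
    using sum_tuples_Suc[where m=m and j="i+j" and F=F] by simp
  also have "\<dots> = (\<Sum>a\<in>{1..m}. \<Sum>xs\<in>tuples m i. \<Sum>ys\<in>tuples m j. F (a#xs@ys))"
    using Suc by simp
  also have "\<dots> = (\<Sum>xs\<in>tuples m (Suc i). \<Sum>ys\<in>tuples m j. F (xs@ys))"
    using sum_tuples_Suc[where m=m and j=i and F="\<lambda>xs. \<Sum>ys\<in>tuples m j. F (xs@ys)"] by simp
  finally show ?case .
qed

lemma tuples_length: "x \<in> tuples m j \<Longrightarrow> length x = j" by (simp add: tuples_def)
lemma tuples_append: "xs \<in> tuples m i \<Longrightarrow> ys \<in> tuples m j \<Longrightarrow> xs @ ys \<in> tuples m (i+j)"
  by (auto simp: tuples_def)



lemma split_sum_ivl: "r \<le> k \<Longrightarrow> (\<Sum>b\<in>{1..k}. h b) = (\<Sum>b\<in>{1..r}. h b) + (\<Sum>b\<in>{r+1..k}. h b)"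
  for h :: "nat \<Rightarrow> real"
proof -
  assume "r \<le> k"
  then have "{1..k} = {1..r} \<union> {r+1..k}" by auto
  then show ?thesis by (simp add: sum.union_disjoint[symmetric] ivl_disj_int)
qed

lemma chain_ident:
  fixes P :: "nat \<Rightarrow> real"
  assumes "1 \<le> m" "m \<le> k"
  shows "(\<Sum>r\<in>{1..k-1}. if r < m then P r else P (r+1)) + P m = (\<Sum>b\<in>{1..k}. P b)"
  using assms(2)
proof (induction k rule: dec_induct)
  case base
  have "(\<Sum>r\<in>{1..m-1}. if r < m then P r else P (r+1)) = (\<Sum>r\<in>{1..m-1}. P r)"
    by (rule sum.cong) auto
  moreover have "{1..m} = insert m {1..m-1}" using assms(1) by auto
  ultimately show ?case using assms(1) by simp
next
  case (step n)
  have "{1..Suc n - 1} = insert n {1..n-1}" using step assms(1) by auto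
  then have "(\<Sum>r\<in>{1..Suc n-1}. if r < m then P r else P (r+1)) =
     P (n+1) + (\<Sum>r\<in>{1..n-1}. if r < m then P r else P (r+1))"
    using step assms(1) by simp
  then show ?case using step by simp
qed

lemma chain_min:
  fixes P :: "nat \<Rightarrow> real"
  assumes nn: "\<forall>b\<in>{1..k}. P b \<ge> 0" and m: "m \<in> {1..k}" and mx: "\<forall>b\<in>{1..k}. P b \<le> P m"
  shows "(\<Sum>b\<in>{1..k}. P b) - P m \<le> (\<Sum>r\<in>{1..k-1}. min (\<Sum>b\<in>{1..r}. P b) (\<Sum>b\<in>{r+1..k}. P b))"
proof -
  have le: "\<And>i A. finite A \<Longrightarrow> i \<in> A \<Longrightarrow> A \<subseteq> {1..k} \<Longrightarrow> P i \<le> sum P A"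
    by (rule member_le_sum) (use nn in auto)
  have key: "(if r < m then P r else P (r+1)) \<le> min (\<Sum>b\<in>{1..r}. P b) (\<Sum>b\<in>{r+1..k}. P b)"
    if r: "r \<in> {1..k-1}" for r
  proof (cases "r < m")
    case True
    have "P r \<le> (\<Sum>b\<in>{1..r}. P b)" using r by (intro le) auto
    moreover have "P r \<le> P m" using mx r by auto
    moreover have "P m \<le> (\<Sum>b\<in>{r+1..k}. P b)" using r m True by (intro le) auto
    ultimately show ?thesis using True by simp
  next
    case False
    have "P (r+1) \<le> P m" using mx r by auto
    moreover have "P m \<le> (\<Sum>b\<in>{1..r}. P b)" using r m False by (intro le) auto
    moreover have "P (r+1) \<le> (\<Sum>b\<in>{r+1..k}. P b)" using r by (intro le) auto
    ultimately show ?thesis using False by simp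
  qed
  have "(\<Sum>b\<in>{1..k}. P b) - P m = (\<Sum>r\<in>{1..k-1}. if r < m then P r else P (r+1))"
    using chain_ident[of m k P] m by auto
  also have "\<dots> \<le> (\<Sum>r\<in>{1..k-1}. min (\<Sum>b\<in>{1..r}. P b) (\<Sum>b\<in>{r+1..k}. P b))"
    by (rule sum_mono) (rule key)
  finally show ?thesis .
qed

lemma split_ineq:
  fixes P N :: "nat \<Rightarrow> real"
  assumes nP: "\<forall>b\<in>{1..k}. P b \<ge> 0" and nN: "\<forall>b\<in>{1..k}. N b \<ge> 0"
    and m: "m \<in> {1..k}" and mx: "\<forall>b\<in>{1..k}. P b \<le> P m"
    and m': "m' \<in> {1..k}" and mx': "\<forall>b\<in>{1..k}. N b \<le> N m'"
  shows "2*((\<Sum>b\<in>{1..k}. P b) - P m) + 2*((\<Sum>b\<in>{1..k}. N b) - N m') \<le>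
    (\<Sum>r\<in>{1..k-1}. (\<Sum>b\<in>{1..k}. P b + N b)
        - \<bar>(\<Sum>b\<in>{1..r}. P b - N b) - (\<Sum>b\<in>{r+1..k}. P b - N b)\<bar>)"
proof -
  have pr: "2 * min (\<Sum>b\<in>{1..r}. P b) (\<Sum>b\<in>{r+1..k}. P b) + 2 * min (\<Sum>b\<in>{1..r}. N b) (\<Sum>b\<in>{r+1..k}. N b)
     \<le> (\<Sum>b\<in>{1..k}. P b + N b) - \<bar>(\<Sum>b\<in>{1..r}. P b - N b) - (\<Sum>b\<in>{r+1..k}. P b - N b)\<bar>"
    if r: "r \<in> {1..k-1}" for r
  proof -
    have rk: "r \<le> k" using r by auto
    have e1: "(\<Sum>b\<in>{1..k}. P b + N b) = (\<Sum>b\<in>{1..r}. P b) + (\<Sum>b\<in>{r+1..k}. P b) + (\<Sum>b\<in>{1..r}. N b) + (\<Sum>b\<in>{r+1..k}. N b)"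
      using split_sum_ivl[OF rk, of "\<lambda>b. P b + N b"] by (simp add: sum.distrib)
    have e2: "(\<Sum>b\<in>{1..r}. P b - N b) = (\<Sum>b\<in>{1..r}. P b) - (\<Sum>b\<in>{1..r}. N b)" by (simp add: sum_subtractf)
    have e3: "(\<Sum>b\<in>{r+1..k}. P b - N b) = (\<Sum>b\<in>{r+1..k}. P b) - (\<Sum>b\<in>{r+1..k}. N b)" by (simp add: sum_subtractf)
    show ?thesis unfolding e1 e2 e3 by (simp add: min_def abs_real_def)
  qed
  have "2*((\<Sum>b\<in>{1..k}. P b) - P m) + 2*((\<Sum>b\<in>{1..k}. N b) - N m') \<le>
     2*(\<Sum>r\<in>{1..k-1}. min (\<Sum>b\<in>{1..r}. P b) (\<Sum>b\<in>{r+1..k}. P b))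
     + 2*(\<Sum>r\<in>{1..k-1}. min (\<Sum>b\<in>{1..r}. N b) (\<Sum>b\<in>{r+1..k}. N b))"
    using chain_min[OF nP m mx] chain_min[OF nN m' mx'] by (intro add_mono mult_left_mono) auto
  also have "\<dots> = (\<Sum>r\<in>{1..k-1}. 2 * min (\<Sum>b\<in>{1..r}. P b) (\<Sum>b\<in>{r+1..k}. P b) + 2 * min (\<Sum>b\<in>{1..r}. N b) (\<Sum>b\<in>{r+1..k}. N b))"
    by (simp add: sum.distrib sum_distrib_left)
  also have "\<dots> \<le> (\<Sum>r\<in>{1..k-1}. (\<Sum>b\<in>{1..k}. P b + N b)
        - \<bar>(\<Sum>b\<in>{1..r}. P b - N b) - (\<Sum>b\<in>{r+1..k}. P b - N b)\<bar>)"
    by (rule sum_mono) (rule pr)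
  finally show ?thesis .
qed



definition owt :: "real ^ 'd \<Rightarrow> ('d \<times> bool) option \<Rightarrow> real" where
  "owt v q = (case q of None \<Rightarrow> 1 - l1norm v
      | Some cs \<Rightarrow> (if snd cs then max (v $ fst cs) 0 else max (- (v $ fst cs)) 0))"

lemma sum_owners:
  fixes g :: "('d::finite \<times> bool) option \<Rightarrow> real"
  shows "(\<Sum>q\<in>UNIV. g q) = g None + (\<Sum>c\<in>UNIV. g (Some (c,True)) + g (Some (c,False)))"
proof -
  have "(\<Sum>q\<in>UNIV. g q) = g None + (\<Sum>q\<in>range Some. g q)"
    unfolding UNIV_option_conv by (subst sum.insert) auto
  also have "(\<Sum>q\<in>range Some. g q) = (\<Sum>cs\<in>UNIV. g (Some cs))"
    by (subst sum.reindex) (auto simp: comp_def)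
  also have "\<dots> = (\<Sum>cs\<in>UNIV \<times> UNIV. g (Some cs))" by simp
  also have "\<dots> = (\<Sum>c\<in>UNIV. \<Sum>s\<in>UNIV. g (Some (c,s)))"
    by (subst sum.cartesian_product) (rule sum.cong, auto)
  also have "\<dots> = (\<Sum>c\<in>UNIV. g (Some (c,True)) + g (Some (c,False)))"
    by (simp add: UNIV_bool add.commute)
  finally show ?thesis .
qed

lemma l1norm_nonneg: "0 \<le> l1norm v" by (simp add: l1norm_def sum_nonneg)

lemma comp_le_l1: "\<bar>v $ c\<bar> \<le> l1norm v"
  unfolding l1norm_def by (rule member_le_sum) auto

lemma owt_nonneg: "l1norm v \<le> 1 \<Longrightarrow> 0 \<le> owt v q"
  by (auto simp: owt_def split: option.splits)

lemma owt_le1: "l1norm v \<le> 1 \<Longrightarrow> owt v q \<le> 1"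
  using comp_le_l1[of v] l1norm_nonneg[of v]
  by (auto simp: owt_def split: option.splits) (smt (verit) comp_le_l1)+

lemma owt_sum: "(\<Sum>q\<in>UNIV. owt v q) = 1"
proof -
  have "(\<Sum>c\<in>UNIV. owt v (Some (c,True)) + owt v (Some (c,False))) = l1norm v"
    unfolding l1norm_def by (rule sum.cong) (auto simp: owt_def)
  then show ?thesis by (simp add: sum_owners owt_def)
qed

lemma owt_diff: "v $ c = owt v (Some (c,True)) - owt v (Some (c,False))"
  by (auto simp: owt_def)



lemma snoc_tuples: "xs \<in> tuples m l \<Longrightarrow> a \<in> {1..m} \<Longrightarrow> xs @ [a] \<in> tuples m (Suc l)"
  by (auto simp: tuples_def)

locale thm2 =
  fixes k n :: nat and \<epsilon> :: real and f :: "nat list \<Rightarrow> real ^ 'd"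
  assumes k2: "k \<ge> 2"
    and bounded: "\<And>xs. xs \<in> tuples (2*k) n \<Longrightarrow> l1norm (f xs) \<le> 1"
    and hyp: "\<And>l xs r. l \<in> {1..n} \<Longrightarrow> xs \<in> tuples (2*k) (l - 1) \<Longrightarrow> r \<in> {1..k-1} \<Longrightarrow>
       1 / (2 * real k) * l1norm
         ((\<Sum>b\<in>{1..r}. partial_avg k n f (xs @ [b]) + partial_avg k n f (xs @ [b + k]))
          - (\<Sum>b\<in>{r+1..k}. partial_avg k n f (xs @ [b]) + partial_avg k n f (xs @ [b + k])))
       \<ge> 1 - \<epsilon>"

context thm2
begin

definition W :: "nat list \<Rightarrow> ('d \<times> bool) option \<Rightarrow> real" where
  "W xs q = (1 / real (card (tuples (2*k) (n - length xs)))) *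
      (\<Sum>ys\<in>tuples (2*k) (n - length xs). owt (f (xs @ ys)) q)"

definition pp :: "nat list \<Rightarrow> nat \<Rightarrow> ('d \<times> bool) option \<Rightarrow> real" where
  "pp xs b q = (W (xs @ [b]) q + W (xs @ [b + k]) q) / 2"

definition bstar :: "nat list \<Rightarrow> ('d \<times> bool) option \<Rightarrow> nat" where
  "bstar xs q = (SOME b. b \<in> {1..k} \<and> (\<forall>b'\<in>{1..k}. pp xs b' q \<le> pp xs b q))"

lemma bstar_ex: "\<exists>b. b \<in> {1..k} \<and> (\<forall>b'\<in>{1..k}. pp xs b' q \<le> pp xs b q)"
proof -
  let ?S = "(\<lambda>b. pp xs b q) ` {1..k}"
  have ne: "?S \<noteq> {}" using k2 by auto
  have fin: "finite ?S" by auto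
  obtain b where b: "b \<in> {1..k}" "pp xs b q = Max ?S" using Max_in[OF fin ne] by auto
  have "\<forall>b'\<in>{1..k}. pp xs b' q \<le> pp xs b q" using b(2) Max_ge[OF fin] by auto
  then show ?thesis using b(1) by blast
qed

lemma bstar_in: "bstar xs q \<in> {1..k}"
  using someI_ex[OF bstar_ex[of xs q]] unfolding bstar_def by blast

lemma bstar_max: "b' \<in> {1..k} \<Longrightarrow> pp xs b' q \<le> pp xs (bstar xs q) q"
  using someI_ex[OF bstar_ex[of xs q]] unfolding bstar_def by blast

lemma card_T_pos: "real (card (tuples (2*k) j)) > 0"
  using k2 by (simp add: card_tuples)

lemma W_nonneg:
  assumes "xs \<in> tuples (2*k) l" "l \<le> n"
  shows "0 \<le> W xs q"
proof -
  have "\<And>ys. ys \<in> tuples (2*k) (n - length xs) \<Longrightarrow> 0 \<le> owt (f (xs @ ys)) q"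
  proof -
    fix ys assume "ys \<in> tuples (2*k) (n - length xs)"
    then have "xs @ ys \<in> tuples (2*k) (l + (n - l))"
      using assms tuples_append tuples_length by metis
    then show "0 \<le> owt (f (xs @ ys)) q" using assms(2) by (intro owt_nonneg bounded) simp
  qed
  then show ?thesis unfolding W_def by (intro mult_nonneg_nonneg sum_nonneg) auto
qed

lemma W_sum:
  assumes "xs \<in> tuples (2*k) l" "l \<le> n"
  shows "(\<Sum>q\<in>UNIV. W xs q) = 1"
proof -
  let ?T = "tuples (2*k) (n - length xs)"
  have "(\<Sum>q\<in>UNIV. W xs q) = (\<Sum>q\<in>UNIV. \<Sum>ys\<in>?T. owt (f (xs @ ys)) q) / real (card ?T)"
    unfolding W_def by (simp add: sum_divide_distrib)
  also have "(\<Sum>q\<in>UNIV. \<Sum>ys\<in>?T. owt (f (xs @ ys)) q) = (\<Sum>ys\<in>?T. \<Sum>q\<in>UNIV. owt (f (xs @ ys)) q)"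
    by (rule sum.swap)
  also have "\<dots> = real (card ?T)" by (simp add: owt_sum)
  finally show ?thesis using card_T_pos[of "n - length xs"] by simp
qed

lemma pa_comp: "partial_avg k n f xs $ c = W xs (Some (c,True)) - W xs (Some (c,False))"
proof -
  let ?T = "tuples (2*k) (n - length xs)"
  have "partial_avg k n f xs $ c = (1 / real (card ?T)) * (\<Sum>ys\<in>?T. f (xs @ ys) $ c)"
    unfolding partial_avg_def by simp
  also have "(\<Sum>ys\<in>?T. f (xs @ ys) $ c) = (\<Sum>ys\<in>?T. owt (f (xs @ ys)) (Some (c,True)) - owt (f (xs @ ys)) (Some (c,False)))"
    by (rule sum.cong[OF refl], rule owt_diff)
  finally show ?thesis unfolding W_def by (simp add: sum_subtractf right_diff_distrib)
qed

end


context thm2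
begin

lemma node_ineq:
  assumes xs: "xs \<in> tuples (2*k) l" and ln: "l < n"
  shows "(\<Sum>q\<in>UNIV. (\<Sum>b\<in>{1..k}. pp xs b q) - pp xs (bstar xs q) q) \<le> real k * ((real k - 1) * \<epsilon> / 2)"
proof -
  have snoc: "\<And>a. a \<in> {1..2*k} \<Longrightarrow> xs @ [a] \<in> tuples (2*k) (Suc l)" using xs snoc_tuples by blast
  have bk: "\<And>b. b \<in> {1..k} \<Longrightarrow> b \<in> {1..2*k} \<and> b + k \<in> {1..2*k}" by auto
  have pp_nn: "0 \<le> pp xs b q" if b: "b \<in> {1..k}" for b q
  proof -
    have "0 \<le> W (xs@[b]) q" using W_nonneg[OF snoc] bk[OF b] ln by auto
    moreover have "0 \<le> W (xs@[b+k]) q" using W_nonneg[OF snoc] bk[OF b] ln by auto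
    ultimately show ?thesis by (simp add: pp_def)
  qed
  have pp_sum: "\<And>b. b \<in> {1..k} \<Longrightarrow> (\<Sum>q\<in>UNIV. pp xs b q) = 1"
  proof -
    fix b assume b: "b \<in> {1..k}"
    have "(\<Sum>q\<in>UNIV. pp xs b q) = ((\<Sum>q\<in>UNIV. W (xs@[b]) q) + (\<Sum>q\<in>UNIV. W (xs@[b+k]) q)) / 2"
      unfolding pp_def sum_divide_distrib[symmetric] sum.distrib by simp
    also have "\<dots> = 1" using W_sum[OF snoc] bk[OF b] ln by simp
    finally show "(\<Sum>q\<in>UNIV. pp xs b q) = 1" .
  qed
  define P where "P c b = pp xs b (Some (c,True))" for c b
  define N where "N c b = pp xs b (Some (c,False))" for c b
  define Dm where "Dm = (\<Sum>b\<in>{1..k}. pp xs b None)"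
  define X where "X r c = (\<Sum>b\<in>{1..r}. P c b - N c b) - (\<Sum>b\<in>{r+1..k}. P c b - N c b)" for r c
  have Xr: "real k * (1 - \<epsilon>) \<le> (\<Sum>c\<in>UNIV. \<bar>X r c\<bar>)" if r: "r \<in> {1..k-1}" for r
  proof -
    let ?V = "(\<Sum>b\<in>{1..r}. partial_avg k n f (xs @ [b]) + partial_avg k n f (xs @ [b + k]))
          - (\<Sum>b\<in>{r+1..k}. partial_avg k n f (xs @ [b]) + partial_avg k n f (xs @ [b + k]))"
    have h: "1 / (2 * real k) * l1norm ?V \<ge> 1 - \<epsilon>"
      using hyp[of "Suc l" xs r] xs ln r by simp
    have comp: "partial_avg k n f (xs @ [b]) $ c + partial_avg k n f (xs @ [b + k]) $ c = 2 * (P c b - N c b)" for b c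
      unfolding P_def N_def pp_def pa_comp by (simp add: field_simps)
    have "?V $ c = 2 * X r c" for c
      unfolding X_def by (simp add: comp sum_distrib_left right_diff_distrib)
    then have "l1norm ?V = 2 * (\<Sum>c\<in>UNIV. \<bar>X r c\<bar>)"
      unfolding l1norm_def by (simp add: sum_distrib_left abs_mult)
    then show ?thesis using h k2 by (simp add: field_simps)
  qed
  have tot: "(\<Sum>c\<in>UNIV. \<Sum>b\<in>{1..k}. P c b + N c b) + Dm = real k"
  proof -
    have "(\<Sum>b\<in>{1..k}. \<Sum>q\<in>UNIV. pp xs b q) = real k" using pp_sum by simp
    moreover have "(\<Sum>b\<in>{1..k}. \<Sum>q\<in>UNIV. pp xs b q) = Dm + (\<Sum>b\<in>{1..k}. \<Sum>c\<in>UNIV. P c b + N c b)"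
      unfolding Dm_def P_def N_def by (simp add: sum_owners sum.distrib)
    moreover have "(\<Sum>b\<in>{1..k}. \<Sum>c\<in>UNIV. P c b + N c b) = (\<Sum>c\<in>UNIV. \<Sum>b\<in>{1..k}. P c b + N c b)"
      by (rule sum.swap)
    ultimately show ?thesis by simp
  qed
  have per_c: "2*((\<Sum>b\<in>{1..k}. P c b) - P c (bstar xs (Some (c,True)))) + 2*((\<Sum>b\<in>{1..k}. N c b) - N c (bstar xs (Some (c,False))))
     \<le> (\<Sum>r\<in>{1..k-1}. (\<Sum>b\<in>{1..k}. P c b + N c b) - \<bar>X r c\<bar>)" for c
    unfolding X_def
    using bstar_in[of xs "Some (c,True)"] bstar_in[of xs "Some (c,False)"]
    by (intro split_ineq) (auto simp: P_def N_def intro: pp_nn bstar_max)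
  have "(\<Sum>c\<in>UNIV. 2*((\<Sum>b\<in>{1..k}. P c b) - P c (bstar xs (Some (c,True)))) + 2*((\<Sum>b\<in>{1..k}. N c b) - N c (bstar xs (Some (c,False)))))
     \<le> (\<Sum>c\<in>UNIV. \<Sum>r\<in>{1..k-1}. (\<Sum>b\<in>{1..k}. P c b + N c b) - \<bar>X r c\<bar>)"
    by (rule sum_mono) (rule per_c)
  also have "\<dots> = (\<Sum>r\<in>{1..k-1}. \<Sum>c\<in>UNIV. (\<Sum>b\<in>{1..k}. P c b + N c b) - \<bar>X r c\<bar>)"
    by (rule sum.swap)
  also have "\<dots> = (\<Sum>r\<in>{1..k-1}. (\<Sum>c\<in>UNIV. \<Sum>b\<in>{1..k}. P c b + N c b) - (\<Sum>c\<in>UNIV. \<bar>X r c\<bar>))"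
    by (simp add: sum_subtractf)
  also have "\<dots> \<le> (\<Sum>r\<in>{1..k-1}. (real k - Dm) - real k * (1 - \<epsilon>))"
    by (rule sum_mono) (use Xr tot in force)
  also have "\<dots> = (real k - 1) * (real k * \<epsilon> - Dm)"
    using k2 by (simp add: of_nat_diff algebra_simps)
  finally have S1: "(\<Sum>c\<in>UNIV. 2*((\<Sum>b\<in>{1..k}. P c b) - P c (bstar xs (Some (c,True)))) + 2*((\<Sum>b\<in>{1..k}. N c b) - N c (bstar xs (Some (c,False)))))
     \<le> (real k - 1) * (real k * \<epsilon> - Dm)" .
  have Dm_nn: "0 \<le> Dm" unfolding Dm_def by (rule sum_nonneg) (rule pp_nn)
  have "Dm \<le> real (card {1..k}) * pp xs (bstar xs None) None"
    unfolding Dm_def by (rule sum_bounded_above) (rule bstar_max)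
  then have Dmk: "Dm \<le> real k * pp xs (bstar xs None) None" by simp
  have "(\<Sum>q\<in>UNIV. (\<Sum>b\<in>{1..k}. pp xs b q) - pp xs (bstar xs q) q) =
     (Dm - pp xs (bstar xs None) None) + (\<Sum>c\<in>UNIV. ((\<Sum>b\<in>{1..k}. P c b) - P c (bstar xs (Some (c,True)))) + ((\<Sum>b\<in>{1..k}. N c b) - N c (bstar xs (Some (c,False)))))"
    unfolding Dm_def P_def N_def by (simp add: sum_owners)
  also have "\<dots> \<le> (Dm - Dm / real k) + (real k - 1) * (real k * \<epsilon> - Dm) / 2"
  proof (rule add_mono)
    show "Dm - pp xs (bstar xs None) None \<le> Dm - Dm / real k" using Dmk k2 by (simp add: field_simps)
    show "(\<Sum>c\<in>UNIV. ((\<Sum>b\<in>{1..k}. P c b) - P c (bstar xs (Some (c,True)))) + ((\<Sum>b\<in>{1..k}. N c b) - N c (bstar xs (Some (c,False)))))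
       \<le> (real k - 1) * (real k * \<epsilon> - Dm) / 2"
    proof -
      have "(\<Sum>c\<in>UNIV. 2*((\<Sum>b\<in>{1..k}. P c b) - P c (bstar xs (Some (c,True)))) + 2*((\<Sum>b\<in>{1..k}. N c b) - N c (bstar xs (Some (c,False)))))
        = 2 * (\<Sum>c\<in>UNIV. ((\<Sum>b\<in>{1..k}. P c b) - P c (bstar xs (Some (c,True)))) + ((\<Sum>b\<in>{1..k}. N c b) - N c (bstar xs (Some (c,False)))))"
        by (simp add: sum_distrib_left distrib_left)
      then show ?thesis using S1 by linarith
    qed
  qed
  also have "\<dots> \<le> real k * ((real k - 1) * \<epsilon> / 2)"
  proof -
    have a: "0 \<le> Dm * (real k - 1)" using k2 Dm_nn by simp
    have "Dm - Dm / real k = Dm * (real k - 1) / real k" using k2 by (simp add: field_simps)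
    also have "\<dots> \<le> Dm * (real k - 1) / 2" using a k2 by (intro divide_left_mono) auto
    finally have b: "Dm - Dm / real k \<le> Dm * (real k - 1) / 2" .
    have c: "(real k - 1) * (real k * \<epsilon> - Dm) / 2 = real k * ((real k - 1) * \<epsilon> / 2) - Dm * (real k - 1) / 2"
      by (simp add: field_simps)
    show ?thesis using b c by linarith
  qed
  finally show ?thesis .
qed

end


definition Dv :: "nat \<Rightarrow> (nat list \<Rightarrow> nat) \<Rightarrow> nat list \<Rightarrow> nat" where
  "Dv k bs x = (\<Sum>l<length x. if x ! l \<in> {bs (take l x), bs (take l x) + k} then 0 else 1)"

lemma Dv_Cons: "Dv k bs (a # ys) = (if a \<in> {bs [], bs [] + k} then 0 else 1) + Dv k (\<lambda>zs. bs (a # zs)) ys"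
  unfolding Dv_def length_Cons by (subst sum.lessThan_Suc_shift) (simp del: insert_iff)

lemma sum_pair_ind:
  fixes h :: "nat \<Rightarrow> real"
  assumes b0: "b0 \<in> {1..k}"
  shows "(\<Sum>a\<in>{1..2*k}. if a \<in> {b0, b0 + k} then 0 else h a) = (\<Sum>a\<in>{1..2*k}. h a) - h b0 - h (b0 + k)"
proof -
  have sub: "{b0, b0+k} \<subseteq> {1..2*k}" using b0 by auto
  have ne: "b0 \<noteq> b0 + k" using b0 by auto
  have "(\<Sum>a\<in>{1..2*k}. h a) = (\<Sum>a\<in>{1..2*k}. if a \<in> {b0, b0 + k} then h a else 0) + (\<Sum>a\<in>{1..2*k}. if a \<in> {b0, b0 + k} then 0 else h a)"
    by (simp add: sum.distrib[symmetric] del: insert_iff) (rule sum.cong, auto)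
  moreover have "(\<Sum>a\<in>{1..2*k}. if a \<in> {b0, b0 + k} then h a else 0) = (\<Sum>a\<in>{b0, b0+k}. h a)"
    using sub by (simp add: sum.If_cases Int_absorb1 del: insert_iff)
  moreover have "(\<Sum>a\<in>{b0, b0+k}. h a) = h b0 + h (b0 + k)" using ne by simp
  ultimately show ?thesis by linarith
qed

lemma sum_2k_split:
  fixes h :: "nat \<Rightarrow> real"
  shows "(\<Sum>a\<in>{1..2*k}. h a) = (\<Sum>b\<in>{1..k}. h b + h (b + k))"
proof -
  have "(\<Sum>a\<in>{1..2*k}. h a) = (\<Sum>a\<in>{1..k}. h a) + (\<Sum>a\<in>{k+1..2*k}. h a)"
    using split_sum_ivl[of k "2*k" h] by simp
  moreover have "(\<Sum>a\<in>{k+1..2*k}. h a) = (\<Sum>b\<in>{1..k}. h (b + k))"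
  proof -
    have eq: "{k+1..2*k} = (\<lambda>b. b + k) ` {1..k}" by (auto simp: image_iff intro!: exI[of _ "x - k" for x])
    show ?thesis unfolding eq by (subst sum.reindex) (auto simp: inj_on_def)
  qed
  ultimately show ?thesis by (simp add: sum.distrib)
qed

lemma pow_if: "(\<theta>::real) ^ (if P then 0 else 1) = (if P then 1 else \<theta>)" by simp

lemma count_Dv:
  fixes \<theta> :: real
  assumes bs: "\<And>ys. bs ys \<in> {1..k}"
  shows "(\<Sum>x\<in>tuples (2*k) j. \<theta> ^ Dv k bs x) = (2 + 2 * (real k - 1) * \<theta>) ^ j"
  using bs
proof (induction j arbitrary: bs)
  case 0 then show ?case by (simp add: tuples_0 Dv_def)
next
  case (Suc j)
  have "(\<Sum>x\<in>tuples (2*k) (Suc j). \<theta> ^ Dv k bs x) =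
     (\<Sum>a\<in>{1..2*k}. \<Sum>ys\<in>tuples (2*k) j. (if a \<in> {bs [], bs [] + k} then 1 else \<theta>) * \<theta> ^ Dv k (\<lambda>zs. bs (a # zs)) ys)"
    by (simp add: sum_tuples_Suc Dv_Cons power_add pow_if del: insert_iff)
  also have "\<dots> = (\<Sum>a\<in>{1..2*k}. (if a \<in> {bs [], bs [] + k} then 1 else \<theta>) * (2 + 2 * (real k - 1) * \<theta>) ^ j)"
    using Suc by (simp add: sum_distrib_left[symmetric] del: insert_iff)
  also have "\<dots> = (\<Sum>a\<in>{1..2*k}. (if a \<in> {bs [], bs [] + k} then 1 else \<theta>)) * (2 + 2 * (real k - 1) * \<theta>) ^ j"
    by (simp add: sum_distrib_right)
  also have "(\<Sum>a\<in>{1..2*k}. (if a \<in> {bs [], bs [] + k} then 1 else \<theta>)) = 2 + 2 * (real k - 1) * \<theta>"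
  proof -
    have b0: "bs [] \<in> {1..k}" using Suc.prems by blast
    have "(\<Sum>a\<in>{1..2*k}. (if a \<in> {bs [], bs [] + k} then 1 else \<theta>)) =
      (\<Sum>a\<in>{1..2*k}. \<theta> + (if a \<in> {bs [], bs [] + k} then 0 else (\<lambda>_. 0) a) + (if a \<in> {bs [], bs [] + k} then 1 - \<theta> else 0))"
      by (rule sum.cong) auto
    also have "\<dots> = 2 * real k * \<theta> + ((\<Sum>a\<in>{1..2*k}. (\<lambda>_. 0) a) - 0 - 0) + (\<Sum>a\<in>{1..2*k}. if a \<in> {bs [], bs [] + k} then 1 - \<theta> else 0)"
      using sum_pair_ind[OF b0, of "\<lambda>_. 0"] by (simp add: sum.distrib del: insert_iff)
    also have "(\<Sum>a\<in>{1..2*k}. if a \<in> {bs [], bs [] + k} then 1 - \<theta> else 0) = 2 * (1 - \<theta>)"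
    proof -
      have sub: "{bs [], bs []+k} \<subseteq> {1..2*k}" using b0 by auto
      have ne: "bs [] \<noteq> bs [] + k" using b0 by auto
      have "(\<Sum>a\<in>{1..2*k}. if a \<in> {bs [], bs [] + k} then 1 - \<theta> else 0) = (\<Sum>a\<in>{bs [], bs []+k}. 1 - \<theta>)"
        using sub by (simp add: sum.If_cases Int_absorb1 del: insert_iff)
      then show ?thesis using ne by simp
    qed
    finally show ?thesis by (simp add: algebra_simps)
  qed
  finally show ?case by simp
qed



context thm2
begin

lemma dev_node:
  assumes xs: "xs \<in> tuples (2*k) l" and ln: "l < n" and nj: "n = l + Suc j"
  shows "(\<Sum>a\<in>{1..2*k}. \<Sum>ys\<in>tuples (2*k) j. \<Sum>q\<in>UNIV.
            owt (f (xs @ a # ys)) q * (if a \<in> {bstar xs q, bstar xs q + k} then 0 else 1))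
         \<le> real ((2*k)^j) * (2 * (real k * ((real k - 1) * \<epsilon> / 2)))"
proof -
  let ?c = "real ((2*k)^j)"
  have lx: "length xs = l" using xs tuples_length by blast
  have inner: "(\<Sum>ys\<in>tuples (2*k) j. owt (f (xs @ a # ys)) q) = ?c * W (xs @ [a]) q" for a q
  proof -
    have "n - length (xs @ [a]) = j" using lx nj by simp
    then show ?thesis unfolding W_def using card_T_pos[of j] k2 by (simp add: card_tuples)
  qed
  have "(\<Sum>a\<in>{1..2*k}. \<Sum>ys\<in>tuples (2*k) j. \<Sum>q\<in>UNIV.
            owt (f (xs @ a # ys)) q * (if a \<in> {bstar xs q, bstar xs q + k} then 0 else 1))
     = (\<Sum>a\<in>{1..2*k}. \<Sum>q\<in>UNIV. \<Sum>ys\<in>tuples (2*k) j.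
            owt (f (xs @ a # ys)) q * (if a \<in> {bstar xs q, bstar xs q + k} then 0 else 1))"
    by (rule sum.cong[OF refl], rule sum.swap)
  also have "\<dots> = (\<Sum>a\<in>{1..2*k}. \<Sum>q\<in>UNIV. (if a \<in> {bstar xs q, bstar xs q + k} then 0 else ?c * W (xs @ [a]) q))"
    by (rule sum.cong[OF refl], rule sum.cong[OF refl]) (simp add: sum_distrib_right[symmetric] inner del: insert_iff)
  also have "\<dots> = (\<Sum>q\<in>UNIV. \<Sum>a\<in>{1..2*k}. (if a \<in> {bstar xs q, bstar xs q + k} then 0 else ?c * W (xs @ [a]) q))"
    by (rule sum.swap)
  also have "\<dots> = (\<Sum>q\<in>UNIV. 2 * ?c * ((\<Sum>b\<in>{1..k}. pp xs b q) - pp xs (bstar xs q) q))"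
  proof (rule sum.cong[OF refl])
    fix q
    have "(\<Sum>a\<in>{1..2*k}. (if a \<in> {bstar xs q, bstar xs q + k} then 0 else ?c * W (xs @ [a]) q))
      = (\<Sum>a\<in>{1..2*k}. ?c * W (xs @ [a]) q) - ?c * W (xs @ [bstar xs q]) q - ?c * W (xs @ [bstar xs q + k]) q"
      by (rule sum_pair_ind[OF bstar_in])
    also have "(\<Sum>a\<in>{1..2*k}. ?c * W (xs @ [a]) q) = (\<Sum>b\<in>{1..k}. ?c * W (xs @ [b]) q + ?c * W (xs @ [b+k]) q)"
      by (rule sum_2k_split)
    also have "\<dots> = 2 * ?c * (\<Sum>b\<in>{1..k}. pp xs b q)"
      unfolding pp_def sum_distrib_left by (rule sum.cong[OF refl]) (simp add: field_simps)
    finally have e: "(\<Sum>a\<in>{1..2*k}. (if a \<in> {bstar xs q, bstar xs q + k} then 0 else ?c * W (xs @ [a]) q))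
      = 2 * ?c * (\<Sum>b\<in>{1..k}. pp xs b q) - ?c * W (xs @ [bstar xs q]) q - ?c * W (xs @ [bstar xs q + k]) q" .
    have e2: "2 * ?c * pp xs (bstar xs q) q = ?c * W (xs @ [bstar xs q]) q + ?c * W (xs @ [bstar xs q + k]) q"
      unfolding pp_def by (simp add: field_simps)
    show "(\<Sum>a\<in>{1..2*k}. (if a \<in> {bstar xs q, bstar xs q + k} then 0 else ?c * W (xs @ [a]) q))
       = 2 * ?c * ((\<Sum>b\<in>{1..k}. pp xs b q) - pp xs (bstar xs q) q)"
      unfolding e right_diff_distrib e2 by simp
  qed
  also have "\<dots> = 2 * ?c * (\<Sum>q\<in>UNIV. (\<Sum>b\<in>{1..k}. pp xs b q) - pp xs (bstar xs q) q)"
    by (simp add: sum_distrib_left)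
  also have "\<dots> \<le> 2 * ?c * (real k * ((real k - 1) * \<epsilon> / 2))"
    using node_ineq[OF xs ln] by (intro mult_left_mono) auto
  finally show ?thesis by (simp add: algebra_simps)
qed

lemma dev_level:
  assumes ln: "l < n"
  shows "(\<Sum>x\<in>tuples (2*k) n. \<Sum>q\<in>UNIV. owt (f x) q *
            (if x ! l \<in> {bstar (take l x) q, bstar (take l x) q + k} then 0 else 1))
         \<le> (2 * real k) ^ n * ((real k - 1) * \<epsilon> / 2)"
proof -
  define j where "j = n - Suc l"
  have nj: "n = l + Suc j" using ln j_def by simp
  define G where "G x = (\<Sum>q\<in>UNIV. owt (f x) q *
            (if x ! l \<in> {bstar (take l x) q, bstar (take l x) q + k} then 0 else (1::real)))" for x
  have "(\<Sum>x\<in>tuples (2*k) n. G x) = (\<Sum>xs\<in>tuples (2*k) l. \<Sum>zs\<in>tuples (2*k) (Suc j). G (xs @ zs))"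
    unfolding nj by (rule sum_tuples_add)
  also have "\<dots> = (\<Sum>xs\<in>tuples (2*k) l. \<Sum>a\<in>{1..2*k}. \<Sum>ys\<in>tuples (2*k) j. G (xs @ a # ys))"
    by (simp add: sum_tuples_Suc)
  also have "\<dots> \<le> (\<Sum>xs\<in>tuples (2*k) l. real ((2*k)^j) * (2 * (real k * ((real k - 1) * \<epsilon> / 2))))"
  proof (rule sum_mono)
    fix xs assume xs: "xs \<in> tuples (2*k) l"
    have lx: "length xs = l" using xs tuples_length by blast
    have "G (xs @ a # ys) = (\<Sum>q\<in>UNIV. owt (f (xs @ a # ys)) q * (if a \<in> {bstar xs q, bstar xs q + k} then 0 else 1))" for a ys
      unfolding G_def using lx by (simp add: nth_append del: insert_iff)
    then show "(\<Sum>a\<in>{1..2*k}. \<Sum>ys\<in>tuples (2*k) j. G (xs @ a # ys)) \<le> real ((2*k)^j) * (2 * (real k * ((real k - 1) * \<epsilon> / 2)))"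
      using dev_node[OF xs ln nj] by simp
  qed
  also have "\<dots> = (2 * real k) ^ n * ((real k - 1) * \<epsilon> / 2)"
    by (simp add: card_tuples nj power_add algebra_simps)
  finally show ?thesis unfolding G_def .
qed

definition Dev :: "('d \<times> bool) option \<Rightarrow> nat list \<Rightarrow> nat" where
  "Dev q x = Dv k (\<lambda>ys. bstar ys q) x"

lemma dev_sum:
  "(\<Sum>x\<in>tuples (2*k) n. \<Sum>q\<in>UNIV. owt (f x) q * real (Dev q x)) \<le> real n * ((2 * real k) ^ n * ((real k - 1) * \<epsilon> / 2))"
proof -
  have "(\<Sum>x\<in>tuples (2*k) n. \<Sum>q\<in>UNIV. owt (f x) q * real (Dev q x))
     = (\<Sum>x\<in>tuples (2*k) n. \<Sum>q\<in>UNIV. \<Sum>l<n. owt (f x) q *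
            (if x ! l \<in> {bstar (take l x) q, bstar (take l x) q + k} then 0 else 1))"
  proof (rule sum.cong[OF refl], rule sum.cong[OF refl])
    fix x q assume x: "x \<in> tuples (2*k) n"
    have "length x = n" using x tuples_length by blast
    then show "owt (f x) q * real (Dev q x) = (\<Sum>l<n. owt (f x) q *
            (if x ! l \<in> {bstar (take l x) q, bstar (take l x) q + k} then 0 else 1))"
      unfolding Dev_def Dv_def by (simp add: sum_distrib_left of_nat_sum del: insert_iff) (rule sum.cong, auto)
  qed
  also have "\<dots> = (\<Sum>l<n. \<Sum>x\<in>tuples (2*k) n. \<Sum>q\<in>UNIV. owt (f x) q *
            (if x ! l \<in> {bstar (take l x) q, bstar (take l x) q + k} then 0 else 1))"
    by (simp add: sum.swap[of _ "{..<n}"])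
  also have "\<dots> \<le> (\<Sum>l<n. (2 * real k) ^ n * ((real k - 1) * \<epsilon> / 2))"
    by (rule sum_mono) (rule dev_level, simp)
  also have "\<dots> = real n * ((2 * real k) ^ n * ((real k - 1) * \<epsilon> / 2))" by simp
  finally show ?thesis .
qed

end


lemma final_alg:
  fixes K d nn :: real
  assumes K: "K \<ge> 2" and d0: "0 < d" and d1: "d < 1/2"
  shows "2 powr ((log 2 K - d * log 2 (K - 1) - bin_entropy d) * real n) * (2 / (1 - d)) ^ n
       = (2 * K) ^ n * (d / ((1 - d) * (K - 1))) powr (real n * d)"
proof -
  have pos1: "0 < 1 - d" using d1 by simp
  have posK: "0 < K - 1" using K by simp
  have th: "0 < d / ((1 - d) * (K - 1))" using d0 pos1 posK by simp
  have be: "bin_entropy d = - d * log 2 d - (1 - d) * log 2 (1 - d)"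
    using d0 d1 by (simp add: bin_entropy_def algebra_simps)
  have l: "ln (2 powr ((log 2 K - d * log 2 (K - 1) - bin_entropy d) * real n) * (2 / (1 - d)) ^ n)
     = real n * (ln K - d * ln (K - 1) + d * ln d + (1 - d) * ln (1 - d)) + real n * (ln 2 - ln (1 - d))"
    using pos1 posK d0 K
    by (simp add: ln_mult ln_realpow ln_div be log_def field_simps)
  have r: "ln ((2 * K) ^ n * (d / ((1 - d) * (K - 1))) powr (real n * d))
     = real n * (ln 2 + ln K) + real n * d * (ln d - ln (1 - d) - ln (K - 1))"
  proof -
    have lnth: "ln (d / ((1 - d) * (K - 1))) = ln d - ln (1 - d) - ln (K - 1)"
      using pos1 posK d0 by (simp add: ln_div ln_mult)
    have "ln ((2 * K) ^ n * (d / ((1 - d) * (K - 1))) powr (real n * d))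
        = ln ((2 * K) ^ n) + ln ((d / ((1 - d) * (K - 1))) powr (real n * d))"
      using th K by (subst ln_mult) auto
    also have "\<dots> = real n * (ln 2 + ln K) + real n * d * (ln d - ln (1 - d) - ln (K - 1))"
      using K by (simp add: ln_realpow ln_mult lnth distrib_left)
    finally show ?thesis .
  qed
  have "ln (2 powr ((log 2 K - d * log 2 (K - 1) - bin_entropy d) * real n) * (2 / (1 - d)) ^ n)
      = ln ((2 * K) ^ n * (d / ((1 - d) * (K - 1))) powr (real n * d))"
    unfolding l r by (simp add: algebra_simps)
  then show ?thesis using pos1 posK d0 K th by simp
qed



lemma card_owners: "card (UNIV :: ('d::finite \<times> bool) option set) = 2 * CARD('d) + 1"
proof -
  have "card (UNIV :: ('d \<times> bool) option set) = card (insert None (range (Some :: ('d \<times> bool) \<Rightarrow> _)))"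
    by (simp add: UNIV_option_conv)
  also have "\<dots> = Suc (card (range (Some :: ('d \<times> bool) \<Rightarrow> _)))" by (subst card_insert_disjoint) auto
  also have "card (range (Some :: ('d \<times> bool) \<Rightarrow> _)) = card (UNIV :: ('d \<times> bool) set)"
    by (rule card_image) auto
  also have "card (UNIV :: ('d \<times> bool) set) = CARD('d) * 2"
    by (simp add: UNIV_Times_UNIV[symmetric] card_cartesian_product del: UNIV_Times_UNIV)
  finally show ?thesis by simp
qed

context thm2
begin

lemma pp_nonneg:
  assumes xs: "xs \<in> tuples (2*k) l" and ln: "l < n" and b: "b \<in> {1..k}"
  shows "0 \<le> pp xs b q"
proof -
  have "0 \<le> W (xs@[b]) q" using W_nonneg[OF snoc_tuples[OF xs]] b ln by auto
  moreover have "0 \<le> W (xs@[b+k]) q" using W_nonneg[OF snoc_tuples[OF xs]] b ln by auto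
  ultimately show ?thesis by (simp add: pp_def)
qed

lemma delta_nonneg:
  assumes n1: "n \<ge> 1"
  shows "0 \<le> (real k - 1) * \<epsilon> / 2"
proof -
  have e: "[] \<in> tuples (2*k) 0" by (simp add: tuples_0)
  have "0 \<le> (\<Sum>q\<in>UNIV. (\<Sum>b\<in>{1..k}. pp [] b q) - pp [] (bstar [] q) q)"
  proof (rule sum_nonneg)
    fix q
    have "pp [] (bstar [] q) q \<le> (\<Sum>b\<in>{1..k}. pp [] b q)"
      by (rule member_le_sum) (use bstar_in pp_nonneg[OF e] n1 in auto)
    then show "0 \<le> (\<Sum>b\<in>{1..k}. pp [] b q) - pp [] (bstar [] q) q" by simp
  qed
  also have "\<dots> \<le> real k * ((real k - 1) * \<epsilon> / 2)" using node_ineq[OF e] n1 by simp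
  finally show ?thesis using k2 by (simp add: zero_le_mult_iff)
qed

lemma sums_basic1: "(\<Sum>x\<in>tuples (2*k) n. \<Sum>q\<in>UNIV. owt (f x) q) = (2 * real k) ^ n"
  by (simp add: owt_sum card_tuples)

lemma sums_basic2: "x \<in> tuples (2*k) n \<Longrightarrow> 0 \<le> owt (f x) q"
  using bounded owt_nonneg by blast

lemma sums_basic3: "x \<in> tuples (2*k) n \<Longrightarrow> owt (f x) q \<le> 1"
  using bounded owt_le1 by blast

lemma sums_basic4: "(\<Sum>x\<in>tuples (2*k) n. \<theta> ^ Dev q x) = (2 + 2 * (real k - 1) * \<theta>) ^ n"
  unfolding Dev_def by (rule count_Dv) (rule bstar_in)

lemma upper:
  assumes "0 \<le> \<theta>"
  shows "(\<Sum>x\<in>tuples (2*k) n. \<Sum>q\<in>UNIV. owt (f x) q * \<theta> ^ Dev q x)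
      \<le> real (2 * CARD('d) + 1) * (2 + 2 * (real k - 1) * \<theta>) ^ n"
proof -
  have "(\<Sum>x\<in>tuples (2*k) n. \<Sum>q\<in>UNIV. owt (f x) q * \<theta> ^ Dev q x)
      \<le> (\<Sum>x\<in>tuples (2*k) n. \<Sum>q\<in>UNIV. \<theta> ^ Dev q x)"
    using sums_basic2 sums_basic3 assms
    by (intro sum_mono) (simp add: mult_left_le_one_le zero_le_power)
  also have "\<dots> = (\<Sum>q\<in>UNIV. \<Sum>x\<in>tuples (2*k) n. \<theta> ^ Dev q x)" by (rule sum.swap)
  also have "\<dots> = real (2 * CARD('d) + 1) * (2 + 2 * (real k - 1) * \<theta>) ^ n"
    by (simp add: sums_basic4 card_owners)
  finally show ?thesis .
qed

lemma key_bound: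
  assumes t0: "0 < \<theta>" and t1: "\<theta> \<le> 1"
  shows "(2 * real k) ^ n * \<theta> powr (real n * ((real k - 1) * \<epsilon> / 2))
      \<le> real (2 * CARD('d) + 1) * (2 + 2 * (real k - 1) * \<theta>) ^ n"
proof -
  define m where "m = real n * ((real k - 1) * \<epsilon> / 2)"
  define L where "L = ln \<theta>"
  have L0: "L \<le> 0" unfolding L_def using t0 t1 by simp
  have tan: "\<theta> ^ D \<ge> \<theta> powr m * (1 + (real D - m) * L)" for D :: nat
  proof -
    have "\<theta> ^ D = exp (real D * L)" unfolding L_def using t0 by (simp add: powr_realpow[symmetric] powr_def)
    also have "\<dots> = exp (m * L) * exp ((real D - m) * L)" by (simp add: exp_add[symmetric] algebra_simps)
    also have "\<dots> \<ge> exp (m * L) * (1 + (real D - m) * L)" by (intro mult_left_mono) auto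
    finally show ?thesis unfolding L_def using t0 by (simp add: powr_def)
  qed
  let ?T = "tuples (2*k) n"
  have "(\<Sum>x\<in>?T. \<Sum>q\<in>UNIV. owt (f x) q * (\<theta> powr m * (1 + (real (Dev q x) - m) * L)))
      \<le> (\<Sum>x\<in>?T. \<Sum>q\<in>UNIV. owt (f x) q * \<theta> ^ Dev q x)"
    using sums_basic2 tan by (intro sum_mono mult_left_mono) auto
  moreover have "(\<Sum>x\<in>?T. \<Sum>q\<in>UNIV. owt (f x) q * (\<theta> powr m * (1 + (real (Dev q x) - m) * L)))
     = \<theta> powr m * ((\<Sum>x\<in>?T. \<Sum>q\<in>UNIV. owt (f x) q) * (1 - m * L)
         + L * (\<Sum>x\<in>?T. \<Sum>q\<in>UNIV. owt (f x) q * real (Dev q x)))"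
    by (simp add: algebra_simps sum.distrib sum_distrib_left sum_distrib_right sum_subtractf)
  moreover have "(\<Sum>x\<in>?T. \<Sum>q\<in>UNIV. owt (f x) q * real (Dev q x)) \<le> m * (2 * real k) ^ n"
    using dev_sum unfolding m_def by (simp add: algebra_simps)
  ultimately have "\<theta> powr m * ((2 * real k) ^ n * (1 - m * L) + L * (m * (2 * real k) ^ n))
      \<le> (\<Sum>x\<in>?T. \<Sum>q\<in>UNIV. owt (f x) q * \<theta> ^ Dev q x)"
    using L0 sums_basic1
    by (smt (verit, ccfv_SIG) mult_left_mono mult_left_mono_neg powr_ge_zero)
  then have "\<theta> powr m * (2 * real k) ^ n \<le> (\<Sum>x\<in>?T. \<Sum>q\<in>UNIV. owt (f x) q * \<theta> ^ Dev q x)"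
    by (simp add: algebra_simps)
  then show ?thesis using upper[of \<theta>] t0 unfolding m_def by (simp add: mult.commute)
qed

lemma key_bound0:
  assumes d0: "(real k - 1) * \<epsilon> / 2 = 0"
  shows "(2 * real k) ^ n \<le> real (2 * CARD('d) + 1) * 2 ^ n"
proof -
  let ?T = "tuples (2*k) n"
  have "(\<Sum>x\<in>?T. \<Sum>q\<in>UNIV. owt (f x) q * (1 - real (Dev q x)))
      \<le> (\<Sum>x\<in>?T. \<Sum>q\<in>UNIV. owt (f x) q * (0::real) ^ Dev q x)"
    using sums_basic2 by (intro sum_mono mult_left_mono) (auto simp: power_0_left)
  moreover have "(\<Sum>x\<in>?T. \<Sum>q\<in>UNIV. owt (f x) q * (1 - real (Dev q x)))
     = (\<Sum>x\<in>?T. \<Sum>q\<in>UNIV. owt (f x) q) - (\<Sum>x\<in>?T. \<Sum>q\<in>UNIV. owt (f x) q * real (Dev q x))"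
    by (simp add: algebra_simps sum_subtractf)
  moreover have "(\<Sum>x\<in>?T. \<Sum>q\<in>UNIV. owt (f x) q * real (Dev q x)) \<le> 0"
    using dev_sum d0 by simp
  ultimately have "(2 * real k) ^ n \<le> (\<Sum>x\<in>?T. \<Sum>q\<in>UNIV. owt (f x) q * (0::real) ^ Dev q x)"
    using sums_basic1 by linarith
  moreover have "(\<Sum>x\<in>?T. \<Sum>q\<in>UNIV. owt (f x) q * (0::real) ^ Dev q x) \<le> real (2 * CARD('d) + 1) * 2 ^ n"
    using upper[of 0] by simp
  ultimately show ?thesis by linarith
qed

end


theorem theorem2:
  fixes k n :: nat and \<epsilon> :: real and f :: "nat list \<Rightarrow> real ^ 'd"
  assumes "k \<ge> 2" and "n \<ge> 1"
    and bounded: "\<And>xs. xs \<in> tuples (2*k) n \<Longrightarrow> l1norm (f xs) \<le> 1"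
    and eps: "\<epsilon> < 1 / (real k - 1)"
    and hyp: "\<And>l xs r. l \<in> {1..n} \<Longrightarrow> xs \<in> tuples (2*k) (l - 1) \<Longrightarrow> r \<in> {1..k-1} \<Longrightarrow>
       1 / (2 * real k) * l1norm
         ((\<Sum>b\<in>{1..r}. partial_avg k n f (xs @ [b]) + partial_avg k n f (xs @ [b + k]))
          - (\<Sum>b\<in>{r+1..k}. partial_avg k n f (xs @ [b]) + partial_avg k n f (xs @ [b + k])))
       \<ge> 1 - \<epsilon>"
  shows "let \<delta> = (real k - 1) * \<epsilon> / 2 in
         real CARD('d) \<ge>
           2 powr ((log 2 k - \<delta> * log 2 (real k - 1) - bin_entropy \<delta>) * real n - 1) - 1 / 2"
proof -
  interpret thm2 k n \<epsilon> f
    using assms(1) bounded hyp by unfold_locales auto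
  define \<delta> where "\<delta> = (real k - 1) * \<epsilon> / 2"
  define E where "E = (log 2 k - \<delta> * log 2 (real k - 1) - bin_entropy \<delta>)"
  have K: "real k \<ge> 2" using assms(1) by simp
  have dnn: "0 \<le> \<delta>" unfolding \<delta>_def using delta_nonneg assms(2) by simp
  have dlt: "\<delta> < 1/2"
  proof -
    have "(real k - 1) * \<epsilon> < (real k - 1) * (1 / (real k - 1))"
      using eps K by (intro mult_strict_left_mono) auto
    then show ?thesis unfolding \<delta>_def using K by simp
  qed
  have main: "2 powr (E * real n) \<le> real (2 * CARD('d) + 1)"
  proof (cases "\<delta> = 0")
    case True
    have be: "bin_entropy \<delta> = 0" using True by (simp add: bin_entropy_def)
    have "2 powr (E * real n) = real k ^ n"
      unfolding E_def using True be K by (simp add: powr_powr[symmetric] powr_realpow)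
    moreover have "(2 * real k) ^ n \<le> real (2 * CARD('d) + 1) * 2 ^ n"
      using key_bound0 True unfolding \<delta>_def by simp
    ultimately show ?thesis by (simp add: power_mult_distrib mult.commute)
  next
    case False
    then have d0: "0 < \<delta>" using dnn by simp
    define \<theta> where "\<theta> = \<delta> / ((1 - \<delta>) * (real k - 1))"
    have t0: "0 < \<theta>" unfolding \<theta>_def using d0 dlt K by simp
    have t1: "\<theta> \<le> 1"
    proof -
      have X: "0 < (1 - \<delta>) * (real k - 1)" using dlt K by simp
      have "1 - \<delta> \<le> (1 - \<delta>) * (real k - 1)"
        using mult_left_mono[of 1 "real k - 1" "1 - \<delta>"] dlt K by simp
      then have "\<delta> \<le> (1 - \<delta>) * (real k - 1)" using dlt by linarith
      then show ?thesis unfolding \<theta>_def using X by (simp add: divide_le_eq)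
    qed
    have kb: "(2 * real k) ^ n * \<theta> powr (real n * \<delta>) \<le> real (2 * CARD('d) + 1) * (2 + 2 * (real k - 1) * \<theta>) ^ n"
      using key_bound[OF t0 t1] unfolding \<delta>_def .
    have q: "2 + 2 * (real k - 1) * \<theta> = 2 / (1 - \<delta>)"
    proof -
      have ne1: "real k - 1 \<noteq> 0" "1 - \<delta> \<noteq> 0" using K dlt by auto
      have "\<theta> = (\<delta> / (1 - \<delta>)) / (real k - 1)" unfolding \<theta>_def by (simp add: divide_divide_eq_left)
      then have e: "(real k - 1) * \<theta> = \<delta> / (1 - \<delta>)" using ne1 by simp
      have "2 + 2 * (real k - 1) * \<theta> = 2 + 2 * (\<delta> / (1 - \<delta>))" using e by (metis mult.assoc)
      also have "\<dots> = 2 / (1 - \<delta>)" using ne1 by (simp add: field_simps)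
      finally show ?thesis .
    qed
    have fa: "2 powr (E * real n) * (2 / (1 - \<delta>)) ^ n = (2 * real k) ^ n * \<theta> powr (real n * \<delta>)"
      unfolding E_def \<theta>_def using final_alg[OF K d0 dlt] by simp
    have A: "0 < (2 / (1 - \<delta>)) ^ n" using dlt by simp
    have "2 powr (E * real n) * (2 / (1 - \<delta>)) ^ n \<le> real (2 * CARD('d) + 1) * (2 / (1 - \<delta>)) ^ n"
      using kb fa q by simp
    then show ?thesis using A by simp
  qed
  have "2 powr (E * real n - 1) = 2 powr (E * real n) / 2" by (simp add: powr_diff)
  then show ?thesis using main unfolding Let_def E_def[symmetric] \<delta>_def[symmetric] by simp
qed

end
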